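(* Let $G_1=(V,E_1,L)$ and $G_2=(V,E_2,L)$ be hypergraphs with loops with the same node set and the same loops (with the same signs), and with $E_1\subseteq E_2$. Then a formulation for $\mathrm{PP}(G_2)$ is an extended formulation for $\mathrm{PP}(G_1)$; that is, $\mathrm{PP}(G_1)$ equals the projection of $\mathrm{PP}(G_2)$ onto the coordinates indexed by $V\cup E_1\cup L$.
   Context: A hypergraph with loops is $G=(V,E,L)$: $V$ a finite node set, $E$ a set of subsets of $V$ of cardinality at least two, $L$ a set of loops $\{i,i\}$, $i\in V$, partitioned as $L=L^-\cup L^+$ (minus/plus loops). $\mathrm{PP}(G):=\mathrm{conv}\{z\in\mathbb{R}^{V\cup E\cup L}: z_{ii}\ge z_i^2\ \forall\{i,i\}\in L^+,\ z_{ii}\le z_i^2\ \forall \{i,i\}\in L^-,\ z_e=\prod_{i\in e}z_i\ \forall e\in E,\ z_i\in[0,1]\ \forall i\in V\}$. *)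

theory Defs
  imports "HOL-Analysis.Analysis" "HOL-Library.Function_Algebras"
begin

text \<open>Pointwise real vector space structure on functions, so that the library
  notion \<open>convex hull\<close> applies to points of R^I represented as functions I \<Rightarrow> real.\<close>

instantiation "fun" :: (type, real_vector) real_vector
begin
definition scaleR_fun :: "real \<Rightarrow> ('a \<Rightarrow> 'b) \<Rightarrow> 'a \<Rightarrow> 'b"
  where "scaleR_fun r f = (\<lambda>x. r *\<^sub>R f x)"
instance
  by standard (auto simp: scaleR_fun_def fun_eq_iff scaleR_add_right scaleR_add_left)
end

text \<open>Coordinate indices: nodes i, edges e, loops {i,i} (identified with i).\<close>
datatype 'a idx = Node 'a | Edge "'a set" | Loop 'a

definition hypergraph_with_loops :: "'a set \<Rightarrow> 'a set set \<Rightarrow> 'a set \<Rightarrow> 'a set \<Rightarrow> bool" where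
  "hypergraph_with_loops V E Lminus Lplus \<longleftrightarrow>
     finite V \<and> (\<forall>e\<in>E. e \<subseteq> V \<and> card e \<ge> 2) \<and>
     Lminus \<subseteq> V \<and> Lplus \<subseteq> V \<and> Lminus \<inter> Lplus = {}"

definition coords :: "'a set \<Rightarrow> 'a set set \<Rightarrow> 'a set \<Rightarrow> 'a set \<Rightarrow> 'a idx set" where
  "coords V E Lminus Lplus = Node ` V \<union> Edge ` E \<union> Loop ` (Lminus \<union> Lplus)"

definition PP_points :: "'a set \<Rightarrow> 'a set set \<Rightarrow> 'a set \<Rightarrow> 'a set \<Rightarrow> ('a idx \<Rightarrow> real) set" where
  "PP_points V E Lminus Lplus =
    {z. (\<forall>c. c \<notin> coords V E Lminus Lplus \<longrightarrow> z c = 0) \<and>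
        (\<forall>i\<in>Lplus. z (Loop i) \<ge> (z (Node i))\<^sup>2) \<and>
        (\<forall>i\<in>Lminus. z (Loop i) \<le> (z (Node i))\<^sup>2) \<and>
        (\<forall>e\<in>E. z (Edge e) = (\<Prod>i\<in>e. z (Node i))) \<and>
        (\<forall>i\<in>V. 0 \<le> z (Node i) \<and> z (Node i) \<le> 1)}"

definition PP :: "'a set \<Rightarrow> 'a set set \<Rightarrow> 'a set \<Rightarrow> 'a set \<Rightarrow> ('a idx \<Rightarrow> real) set" where
  "PP V E Lminus Lplus = convex hull (PP_points V E Lminus Lplus)"

definition proj :: "'i set \<Rightarrow> ('i \<Rightarrow> real) \<Rightarrow> ('i \<Rightarrow> real)" where
  "proj I z = (\<lambda>c. if c \<in> I then z c else 0)"

end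

theory Submission
  imports Defs
begin

lemma linear_proj: "linear (proj I)"
  by (rule linearI) (auto simp: proj_def plus_fun_def scaleR_fun_def fun_eq_iff)

lemma proj_points:
  assumes h1: "hypergraph_with_loops V E1 Lminus Lplus"
    and h2: "hypergraph_with_loops V E2 Lminus Lplus"
    and sub: "E1 \<subseteq> E2"
  shows "proj (coords V E1 Lminus Lplus) ` PP_points V E2 Lminus Lplus = PP_points V E1 Lminus Lplus"
proof
  show "proj (coords V E1 Lminus Lplus) ` PP_points V E2 Lminus Lplus \<subseteq> PP_points V E1 Lminus Lplus"
  proof
    fix w assume "w \<in> proj (coords V E1 Lminus Lplus) ` PP_points V E2 Lminus Lplus"
    then obtain z where z: "z \<in> PP_points V E2 Lminus Lplus" and w: "w = proj (coords V E1 Lminus Lplus) z" by blast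
    have eV: "\<And>e. e \<in> E1 \<Longrightarrow> e \<subseteq> V" using h1 unfolding hypergraph_with_loops_def by auto
    have pr: "(\<Prod>i\<in>e. w (Node i)) = (\<Prod>i\<in>e. z (Node i))" if "e \<in> E1" for e
      using eV[OF that] by (intro prod.cong) (auto simp: w proj_def coords_def)
    have LV: "Lminus \<subseteq> V" "Lplus \<subseteq> V" using h1 unfolding hypergraph_with_loops_def by auto
    have wn: "w (Node i) = (if i \<in> V then z (Node i) else 0)" 
      and wl: "w (Loop i) = (if i \<in> Lminus \<union> Lplus then z (Loop i) else 0)"
      and we: "w (Edge e) = (if e \<in> E1 then z (Edge e) else 0)" for i e
      by (auto simp: w proj_def coords_def image_iff)
    have pr2: "(\<Prod>i\<in>e. z (Node i)) = (\<Prod>i\<in>e. w (Node i))" if "e \<in> E1" for e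
      using pr[OF that] by simp
    show "w \<in> PP_points V E1 Lminus Lplus"
      using z sub LV unfolding PP_points_def
      apply (simp only: mem_Collect_eq)
      apply (intro conjI)
      subgoal by (auto simp: w proj_def)
      subgoal by (auto simp: wn wl)
      subgoal by (auto simp: wn wl)
      subgoal by (auto simp: we pr2)
      subgoal by (auto simp: wn)
      done
  qed
next
  show "PP_points V E1 Lminus Lplus \<subseteq> proj (coords V E1 Lminus Lplus) ` PP_points V E2 Lminus Lplus"
  proof
    fix w assume w: "w \<in> PP_points V E1 Lminus Lplus"
    define z where "z = (\<lambda>c. case c of Edge e \<Rightarrow> (if e \<in> E2 then (\<Prod>i\<in>e. w (Node i)) else 0) | _ \<Rightarrow> w c)"
    have zn[simp]: "z (Node i) = w (Node i)" "z (Loop i) = w (Loop i)" for i by (auto simp: z_def)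
    have "z \<in> PP_points V E2 Lminus Lplus"
      using w unfolding PP_points_def
      apply (auto simp: coords_def)
      subgoal for c by (cases c) (auto simp: z_def)
      subgoal for e by (auto simp: z_def)
      done
    moreover have "proj (coords V E1 Lminus Lplus) z = w"
    proof
      fix c show "proj (coords V E1 Lminus Lplus) z c = w c"
        using w sub unfolding PP_points_def
        by (cases c) (auto simp: proj_def z_def coords_def)
    qed
    ultimately show "w \<in> proj (coords V E1 Lminus Lplus) ` PP_points V E2 Lminus Lplus" by force
  qed
qed

theorem lemma3:
  fixes V :: "'a set" and E1 E2 :: "'a set set" and Lminus Lplus :: "'a set"
  assumes "hypergraph_with_loops V E1 Lminus Lplus"
    and "hypergraph_with_loops V E2 Lminus Lplus"
    and "E1 \<subseteq> E2"
  shows "PP V E1 Lminus Lplus = proj (coords V E1 Lminus Lplus) ` PP V E2 Lminus Lplus"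
  unfolding PP_def
  using convex_hull_linear_image[OF linear_proj, of "coords V E1 Lminus Lplus" "PP_points V E2 Lminus Lplus"]
    proj_points[OF assms] by simp

end
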